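(* Fix an integer $i\ge1$ and let $p_i(r)=\lim_{n\to\infty}\Pr(T^{(n)}_{1,i}=r)$, where $T^{(n)}$ is a uniformly random standard Young tableau of shape $(n,n)$. Then the variance of the probability distribution $p_i$ is $$-\frac{4\cdot 16^{-i}\,\big((2i+1)!\big)^2}{(i!)^4}-\frac{2\cdot 4^{-i}\,(2i+1)!}{(i!)^2}+6i+6.$$
   Context: A standard Young tableau of shape $(n,n)$ is a bijective filling $T$ of the cells $[a,b]$, $a\in\{1,2\}$, $1\le b\le n$, by $\{1,\dots,2n\}$ that increases along rows and down columns; $T_{1,i}$ denotes the entry in row 1, column $i$. The limits $p_i(r)$ exist and form a probability distribution on $\{i,\dots,2i-1\}$. *)

theory Defs
  imports Complex_Main
begin

text \<open>A filling is T :: nat => nat => nat, T a b = entry in row a, column b;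
  it is required to be 0 outside the cells (so the set of tableaux is finite).\<close>

definition cells :: "nat \<Rightarrow> (nat \<times> nat) set" where
  "cells n = {1,2} \<times> {1..n}"

definition is_syt :: "nat \<Rightarrow> (nat \<Rightarrow> nat \<Rightarrow> nat) \<Rightarrow> bool" where
  "is_syt n T \<longleftrightarrow>
     bij_betw (\<lambda>(a,b). T a b) (cells n) {1..2*n}
   \<and> (\<forall>a b. (a,b) \<notin> cells n \<longrightarrow> T a b = 0)
   \<and> (\<forall>a b. (a,b) \<in> cells n \<longrightarrow> (a, Suc b) \<in> cells n \<longrightarrow> T a b < T a (Suc b))
   \<and> (\<forall>b. (1,b) \<in> cells n \<longrightarrow> (2,b) \<in> cells n \<longrightarrow> T 1 b < T 2 b)"

definition syt :: "nat \<Rightarrow> (nat \<Rightarrow> nat \<Rightarrow> nat) set" where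
  "syt n = {T. is_syt n T}"

definition syt_prob :: "nat \<Rightarrow> nat \<Rightarrow> nat \<Rightarrow> real" where
  "syt_prob n i r = real (card {T \<in> syt n. T 1 i = r}) / real (card (syt n))"

definition p_lim :: "nat \<Rightarrow> nat \<Rightarrow> real" where
  "p_lim i r = lim (\<lambda>n. syt_prob n i r)"

definition dist_mean :: "(nat \<Rightarrow> real) \<Rightarrow> nat set \<Rightarrow> real" where
  "dist_mean p S = (\<Sum>r\<in>S. real r * p r)"

definition dist_variance :: "(nat \<Rightarrow> real) \<Rightarrow> nat set \<Rightarrow> real" where
  "dist_variance p S = (\<Sum>r\<in>S. (real r - dist_mean p S)^2 * p r)"

end

theory Submission
  imports Defs
begin


definition ups :: "bool list \<Rightarrow> nat" where "ups xs = length (filter id xs)"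
definition dns :: "bool list \<Rightarrow> nat" where "dns xs = length (filter Not xs)"

lemma ups_simps[simp]: "ups [] = 0" "ups (True#xs) = Suc (ups xs)" "ups (False#xs) = ups xs"
  "ups (xs@ys) = ups xs + ups ys"
  by (auto simp: ups_def)
lemma dns_simps[simp]: "dns [] = 0" "dns (True#xs) = dns xs" "dns (False#xs) = Suc (dns xs)"
  "dns (xs@ys) = dns xs + dns ys"
  by (auto simp: dns_def)
lemma ups_dns_len: "ups xs + dns xs = length xs"
  by (induction xs) (simp_all add: ups_def dns_def)

fun ok :: "nat \<Rightarrow> bool list \<Rightarrow> bool" where
  "ok h [] = True"
| "ok h (True#xs) = ok (Suc h) xs"
| "ok h (False#xs) = (0 < h \<and> ok (h-1) xs)"

lemma ok_append: "ok h (xs@ys) = (ok h xs \<and> ok (h + ups xs - dns xs) ys)"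
proof (induction xs arbitrary: h)
  case Nil then show ?case by simp
next
  case (Cons x xs)
  show ?case
  proof (cases x)
    case True
    then show ?thesis using Cons by simp
  next
    case False
    then show ?thesis using Cons by (cases h) auto
  qed
qed

lemma ok_take: "ok h xs = (\<forall>k\<le>length xs. dns (take k xs) \<le> h + ups (take k xs))"
proof (induction xs arbitrary: h)
  case Nil then show ?case by simp
next
  case (Cons x xs)
  have split: "(\<forall>k\<le>Suc n. P k) = (P 0 \<and> (\<forall>j\<le>n. P (Suc j)))" for P n
  proof (intro iffI conjI allI impI)
    fix k assume H: "P 0 \<and> (\<forall>j\<le>n. P (Suc j))" "k \<le> Suc n"
    then show "P k" by (cases k) auto
  qed auto
  show ?case
  proof (cases x)
    case True
    then show ?thesis using Cons[of "Suc h"] by (simp add: split)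
  next
    case False
    then show ?thesis using Cons[of "h-1"] by (cases h) (auto simp add: split)
  qed
qed

definition G :: "nat \<Rightarrow> nat \<Rightarrow> nat \<Rightarrow> bool list set" where
  "G h a b = {xs. ups xs = a \<and> dns xs = b \<and> ok h xs}"

lemma G_length: "xs \<in> G h a b \<Longrightarrow> length xs = a + b"
  using ups_dns_len[of xs] by (simp add: G_def)

lemma finite_G: "finite (G h a b)"
proof -
  have "G h a b \<subseteq> {xs. set xs \<subseteq> UNIV \<and> length xs = a + b}" using G_length by auto
  then show ?thesis using finite_lists_length_eq[of "UNIV::bool set" "a+b"] finite_subset by auto
qed

definition NG :: "nat \<Rightarrow> nat \<Rightarrow> nat \<Rightarrow> int" where
  "NG h a b = int ((a+b) choose b) - (if h+1 \<le> b then int ((a+b) choose (b-h-1)) else 0)"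

lemma G_split: "G h a b = (if 0 < a then Cons True ` G (Suc h) (a-1) b else {})
   \<union> (if 0 < h \<and> 0 < b then Cons False ` G (h-1) a (b-1) else {})" if "0 < a + b"
proof (rule set_eqI)
  fix xs
  show "xs \<in> G h a b \<longleftrightarrow> xs \<in> (if 0 < a then Cons True ` G (Suc h) (a-1) b else {})
   \<union> (if 0 < h \<and> 0 < b then Cons False ` G (h-1) a (b-1) else {})"
  proof (cases xs)
    case Nil then show ?thesis using that by (auto simp: G_def)
  next
    case (Cons x ys)
    then show ?thesis by (cases x) (auto simp: G_def)
  qed
qed

lemma NG_rec: "NG h a b = (if 0 < a then NG (Suc h) (a-1) b else 0)
   + (if 0 < h \<and> 0 < b then NG (h-1) a (b-1) else 0)"
  if "0 < a + b" "b \<le> a + h"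
proof -
  consider "a = 0" | "0 < a" "b = 0" | "0 < a" "0 < b" by blast
  then show ?thesis
  proof cases
    case 1
    then show ?thesis using that by (auto simp: NG_def)
  next
    case 2
    then show ?thesis by (simp add: NG_def)
  next
    case 3
    then obtain a' b' where ab: "a = Suc a'" "b = Suc b'" by (metis gr0_implies_Suc)
    define M where "M = a' + b"
    have pas: "int (Suc M choose Suc k) = int (M choose k) + int (M choose Suc k)" for k
      by simp
    have e1: "a + b = Suc M" "a' + b = M" "a + b' = M" using ab by (auto simp: M_def)
    show ?thesis
    proof (cases h)
      case 0
      show ?thesis
      proof (cases b')
        case 0 then show ?thesis using ab \<open>h=0\<close> by (simp add: NG_def)
      next
        case (Suc c)
        show ?thesis using ab \<open>h=0\<close> Suc
          using pas[of "Suc c"] pas[of c] by (simp add: NG_def e1)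
      qed
    next
      case (Suc h')
      consider "b' \<le> h'" | "b' = Suc h'" | "Suc h' < b'" by linarith
      then show ?thesis
      proof cases
        case 1 then show ?thesis using ab Suc by (simp add: NG_def e1)
      next
        case 2 then show ?thesis using ab Suc by (simp add: NG_def e1)
      next
        case 3
        define c where "c = b' - h' - 2"
        have c: "b' - h' - 1 = Suc c" "b' - Suc h' = Suc c" "b' - h' - 2 = c"
          using 3 unfolding c_def by arith+
        show ?thesis using ab Suc 3
          using pas[of "b'"] pas[of c] by (simp add: NG_def e1 c)
      qed
    qed
  qed
qed

lemma card_G: "b \<le> a + h \<Longrightarrow> int (card (G h a b)) = NG h a b"
proof (induction "a+b" arbitrary: h a b)
  case 0
  then have "G h a b = {[]}" by (auto simp: G_def) (metis ups_dns_len add_0 length_0_conv)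
  then show ?case using 0 by (simp add: NG_def)
next
  case (Suc N)
  have pos: "0 < a + b" using Suc.hyps(2) by linarith
  have disj: "(if 0 < a then Cons True ` G (Suc h) (a-1) b else {})
   \<inter> (if 0 < h \<and> 0 < b then Cons False ` G (h-1) a (b-1) else {}) = {}" by auto
  have c1: "int (card (if 0 < a then Cons True ` G (Suc h) (a-1) b else {}))
      = (if 0 < a then NG (Suc h) (a-1) b else 0)"
  proof (cases "0 < a")
    case True
    have "int (card (G (Suc h) (a-1) b)) = NG (Suc h) (a-1) b"
      using Suc True by (intro Suc.hyps) auto
    then show ?thesis using True by (simp add: card_image)
  qed simp
  have c2: "int (card (if 0 < h \<and> 0 < b then Cons False ` G (h-1) a (b-1) else {}))
      = (if 0 < h \<and> 0 < b then NG (h-1) a (b-1) else 0)"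
  proof (cases "0 < h \<and> 0 < b")
    case True
    have "int (card (G (h-1) a (b-1))) = NG (h-1) a (b-1)"
      using Suc True by (intro Suc.hyps) auto
    then show ?thesis using True by (simp add: card_image)
  next
    case False then show ?thesis by auto
  qed
  show ?case
    apply (subst G_split[OF pos])
    apply (subst card_Un_disjoint)
    using finite_G disj apply auto[3]
    using c1 c2 NG_rec[OF pos Suc.prems] by simp
qed


declare upt_Suc[simp del]

definition wordS :: "nat \<Rightarrow> nat set \<Rightarrow> bool list" where
  "wordS L U = map (\<lambda>k. k \<in> U) [1..<L+1]"

lemma wordS_len[simp]: "length (wordS L U) = L" by (simp add: wordS_def)

lemma wordS_nth: "1 \<le> r \<Longrightarrow> r \<le> L \<Longrightarrow> wordS L U ! (r-1) = (r \<in> U)"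
  using nth_upt[of 1 "r-1" "L+1"] by (simp add: wordS_def)

lemma wordS_nth': "1 \<le> r \<Longrightarrow> r \<le> L \<Longrightarrow> wordS L U ! (r - Suc 0) = (r \<in> U)"
  using wordS_nth by simp

lemma ups_wordS: "k \<le> L \<Longrightarrow> ups (take k (wordS L U)) = card (U \<inter> {1..k})"
proof -
  assume k: "k \<le> L"
  have "take k (wordS L U) = map (\<lambda>j. j \<in> U) [1..<k+1]"
    using k by (simp add: wordS_def take_map del: upt_Suc)
  then have "ups (take k (wordS L U)) = length (filter (\<lambda>j. j \<in> U) [1..<k+1])"
    by (simp add: ups_def filter_map comp_def)
  also have "\<dots> = card ({x. x \<in> U} \<inter> set [1..<k+1])" by (rule distinct_length_filter) simp
  also have "\<dots> = card (U \<inter> {1..k})" by (simp add: atLeastLessThanSuc_atLeastAtMost)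
  finally show ?thesis .
qed

lemma dns_wordS: "k \<le> L \<Longrightarrow> dns (take k (wordS L U)) = card ({1..k} - U)"
proof -
  assume k: "k \<le> L"
  have "take k (wordS L U) = map (\<lambda>j. j \<in> U) [1..<k+1]"
    using k by (simp add: wordS_def take_map del: upt_Suc)
  then have "dns (take k (wordS L U)) = length (filter (\<lambda>j. j \<notin> U) [1..<k+1])"
    by (simp add: dns_def filter_map comp_def)
  also have "\<dots> = card ({x. x \<notin> U} \<inter> set [1..<k+1])" by (rule distinct_length_filter) simp
  also have "\<dots> = card ({1..k} - U)" by (rule arg_cong[where f=card]) auto
  finally show ?thesis .
qed

definition word :: "nat \<Rightarrow> (nat \<Rightarrow> nat \<Rightarrow> nat) \<Rightarrow> bool list" where
  "word n T = wordS (2*n) (T 1 ` {1..n})"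

definition upset :: "nat \<Rightarrow> bool list \<Rightarrow> nat set" where
  "upset L w = {k \<in> {1..L}. w ! (k-1)}"
definition dnset :: "nat \<Rightarrow> bool list \<Rightarrow> nat set" where
  "dnset L w = {k \<in> {1..L}. \<not> w ! (k-1)}"

definition dec :: "nat \<Rightarrow> bool list \<Rightarrow> nat \<Rightarrow> nat \<Rightarrow> nat" where
  "dec n w a b = (if (a,b) \<in> cells n then
     sorted_list_of_set (if a = 1 then upset (2*n) w else dnset (2*n) w) ! (b-1) else 0)"

lemma wordS_upset: "length w = L \<Longrightarrow> wordS L (upset L w) = w"
  by (intro nth_equalityI) (auto simp: wordS_def upset_def nth_upt)

lemma upset_wordS: "U \<subseteq> {1..L} \<Longrightarrow> upset L (wordS L U) = U"
  by (auto simp: upset_def wordS_nth')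

lemma dnset_wordS: "dnset L (wordS L U) = {1..L} - U"
  by (auto simp: dnset_def wordS_nth')

lemma upset_dnset: "dnset L w = {1..L} - upset L w"
  by (auto simp: dnset_def upset_def)

lemma syt_mono:
  assumes "is_syt n T" "a \<in> {1,2}" "1 \<le> b" "b < b'" "b' \<le> n"
  shows "T a b < T a b'"
proof -
  have "b + Suc d \<le> n \<longrightarrow> T a b < T a (b + Suc d)" for d
  proof (induction d)
    case 0 then show ?case using assms(1-3) by (auto simp: is_syt_def cells_def)
  next
    case (Suc d)
    have "b + Suc (Suc d) \<le> n \<longrightarrow> T a (b + Suc d) < T a (Suc (b + Suc d))"
      using assms(1-3) by (auto simp: is_syt_def cells_def)
    then show ?case using Suc by auto
  qed
  from this[of "b' - b - 1"] show ?thesis using assms(4,5) by simp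
qed

lemma syt_mono_iff:
  assumes "is_syt n T" "a \<in> {1,2}" "b \<in> {1..n}" "b' \<in> {1..n}"
  shows "T a b < T a b' \<longleftrightarrow> b < b'"
  using syt_mono[OF assms(1,2)] assms(3,4)
  by (metis atLeastAtMost_iff linorder_neqE_nat not_less_iff_gr_or_eq)

lemma syt_inj: "is_syt n T \<Longrightarrow> a \<in> {1,2} \<Longrightarrow> inj_on (T a) {1..n}"
  by (intro inj_onI) (metis syt_mono_iff nat_neq_iff)

lemma syt_range: "is_syt n T \<Longrightarrow> (a,b) \<in> cells n \<Longrightarrow> T a b \<in> {1..2*n}"
  unfolding is_syt_def bij_betw_def by auto

lemma syt_col: "is_syt n T \<Longrightarrow> b \<in> {1..n} \<Longrightarrow> T 1 b < T 2 b"
  unfolding is_syt_def cells_def by auto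

lemma syt_rows:
  assumes "is_syt n T"
  shows "T 1 ` {1..n} \<union> T 2 ` {1..n} = {1..2*n}" "T 1 ` {1..n} \<inter> T 2 ` {1..n} = {}"
proof -
  have bij: "bij_betw (\<lambda>(a,b). T a b) (cells n) {1..2*n}" using assms by (simp add: is_syt_def)
  have "(\<lambda>(a,b). T a b) ` cells n = T 1 ` {1..n} \<union> T 2 ` {1..n}"
    by (auto simp: cells_def image_iff)
  then show "T 1 ` {1..n} \<union> T 2 ` {1..n} = {1..2*n}" using bij by (simp add: bij_betw_def)
  show "T 1 ` {1..n} \<inter> T 2 ` {1..n} = {}"
  proof (rule ccontr)
    assume "T 1 ` {1..n} \<inter> T 2 ` {1..n} \<noteq> {}"
    then obtain b b' where "b \<in> {1..n}" "b' \<in> {1..n}" "T 1 b = T 2 b'" by blast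
    then have "(\<lambda>(a,b). T a b) (1,b) = (\<lambda>(a,b). T a b) (2,b')" by simp
    moreover have "(1,b) \<in> cells n" "(2,b') \<in> cells n" using \<open>b \<in> _\<close> \<open>b' \<in> _\<close> by (auto simp: cells_def)
    moreover have inj: "inj_on (\<lambda>(a,b). T a b) (cells n)" using bij by (simp add: bij_betw_def)
    ultimately have "(1::nat,b) = (2,b')" by (intro inj_onD[OF inj]) auto
    then show False by simp
  qed
qed

lemma sorted_image_upt:
  assumes "\<And>b b'. b \<in> {1..n} \<Longrightarrow> b' \<in> {1..n} \<Longrightarrow> b < b' \<Longrightarrow> f b < f b'"
  shows "sorted_list_of_set (f ` {1..n}) = map f [1..<n+1]"
proof -
  have sw: "sorted_wrt (<) (map f [1..<n+1])"
    unfolding sorted_wrt_iff_nth_less using assms by (auto simp: nth_upt)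
  have "set (map f [1..<n+1]) = f ` {1..n}" by (auto simp: atLeastLessThanSuc_atLeastAtMost)
  then show ?thesis
    using sorted_list_of_set_sort_remdups[of "map f [1..<n+1]"] sw
    by (simp add: strict_sorted_iff distinct_remdups_id sorted_sort_id)
qed


lemma word_G:
  assumes T: "is_syt n T"
  shows "word n T \<in> G 0 n n"
proof -
  define U where "U = T 1 ` {1..n}"
  have U12: "U \<subseteq> {1..2*n}" using syt_range[OF T] by (auto simp: U_def cells_def)
  have D: "{1..2*n} - U = T 2 ` {1..n}" using syt_rows[OF T] unfolding U_def by blast
  have inj1: "inj_on (T 1) {1..n}" and inj2: "inj_on (T 2) {1..n}" using syt_inj[OF T] by auto
  have w: "word n T = wordS (2*n) U" by (simp add: word_def U_def)
  have "ups (word n T) = n"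
  proof -
    have "ups (word n T) = ups (take (2*n) (wordS (2*n) U))" by (simp add: w)
    also have "\<dots> = card (U \<inter> {1..2*n})" by (rule ups_wordS) simp
    also have "\<dots> = card U" using U12 by (simp add: Int_absorb2)
    also have "\<dots> = n" using inj1 by (simp add: U_def card_image)
    finally show ?thesis .
  qed
  moreover have "dns (word n T) = n"
  proof -
    have "dns (word n T) = dns (take (2*n) (wordS (2*n) U))" by (simp add: w)
    also have "\<dots> = card ({1..2*n} - U)" by (rule dns_wordS) simp
    also have "\<dots> = card (T 2 ` {1..n})" by (simp only: D)
    also have "\<dots> = n" using inj2 by (simp add: card_image)
    finally show ?thesis .
  qed
  moreover have "ok 0 (word n T)"
    unfolding ok_take
  proof (intro allI impI)
    fix k assume "k \<le> length (word n T)"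
    then have k: "k \<le> 2*n" by (simp add: w)
    have "card ({1..k} - U) \<le> card (T 2 ` {b\<in>{1..n}. T 2 b \<le> k})"
    proof (rule card_mono)
      show "{1..k} - U \<subseteq> T 2 ` {b\<in>{1..n}. T 2 b \<le> k}"
      proof
        fix x assume x: "x \<in> {1..k} - U"
        then have "x \<in> {1..2*n} - U" using k by auto
        then have "x \<in> T 2 ` {1..n}" using D by blast
        then obtain b where "b \<in> {1..n}" "x = T 2 b" by blast
        then show "x \<in> T 2 ` {b\<in>{1..n}. T 2 b \<le> k}" using x by auto
      qed
    qed simp
    also have "\<dots> \<le> card {b\<in>{1..n}. T 2 b \<le> k}" by (rule card_image_le) simp
    also have "\<dots> \<le> card {b\<in>{1..n}. T 1 b \<le> k}"
    proof (rule card_mono)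
      show "{b \<in> {1..n}. T 2 b \<le> k} \<subseteq> {b \<in> {1..n}. T 1 b \<le> k}"
      proof (intro subsetI)
        fix b assume "b \<in> {b \<in> {1..n}. T 2 b \<le> k}"
        then show "b \<in> {b \<in> {1..n}. T 1 b \<le> k}" using syt_col[OF T, of b] by simp
      qed
    qed simp
    also have "\<dots> = card (T 1 ` {b\<in>{1..n}. T 1 b \<le> k})"
      by (rule card_image[symmetric]) (rule inj_on_subset[OF inj1], auto)
    also have "\<dots> \<le> card (U \<inter> {1..k})"
    proof (rule card_mono)
      show "T 1 ` {b\<in>{1..n}. T 1 b \<le> k} \<subseteq> U \<inter> {1..k}"
      proof (intro subsetI)
        fix x assume "x \<in> T 1 ` {b\<in>{1..n}. T 1 b \<le> k}"
        then obtain b where b: "b \<in> {1..n}" "T 1 b \<le> k" "x = T 1 b" by blast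
        have "T 1 b \<in> {1..2*n}" using syt_range[OF T, of 1 b] b by (auto simp: cells_def)
        then show "x \<in> U \<inter> {1..k}" using b by (auto simp: U_def)
      qed
    qed simp
    finally have "card ({1..k} - U) \<le> card (U \<inter> {1..k})" .
    then show "dns (take k (word n T)) \<le> 0 + ups (take k (word n T))"
      using k by (simp add: w ups_wordS dns_wordS)
  qed
  ultimately show ?thesis by (simp add: G_def)
qed

lemma dec_word:
  assumes T: "is_syt n T"
  shows "dec n (word n T) = T"
proof (intro ext)
  fix a b
  define U where "U = T 1 ` {1..n}"
  have U12: "U \<subseteq> {1..2*n}" using syt_range[OF T] by (auto simp: U_def cells_def)
  have D: "{1..2*n} - U = T 2 ` {1..n}" using syt_rows[OF T] unfolding U_def by blast
  have up: "upset (2*n) (word n T) = T 1 ` {1..n}"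
    using U12 by (simp add: word_def upset_wordS U_def)
  have dn: "dnset (2*n) (word n T) = T 2 ` {1..n}"
    using D by (simp add: word_def dnset_wordS U_def)
  have sl: "sorted_list_of_set (T a ` {1..n}) = map (T a) [1..<n+1]" if "a \<in> {1,2}" for a
    by (rule sorted_image_upt) (use syt_mono_iff[OF T that] in auto)
  show "dec n (word n T) a b = T a b"
  proof (cases "(a,b) \<in> cells n")
    case True
    then have a: "a \<in> {1,2}" and b: "1 \<le> b" "b \<le> n" by (auto simp: cells_def)
    have "map (T a) [1..<n+1] ! (b-1) = T a b"
      using b nth_upt[of 1 "b-1" "n+1"] by simp
    then show ?thesis using True a sl[OF a] by (auto simp: dec_def up dn)
  next
    case False
    then show ?thesis using T by (simp add: dec_def is_syt_def)
  qed
qed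

lemma col_lemma:
  fixes U :: "nat set"
  assumes U: "U \<subseteq> {1..L}"
    and bal: "\<forall>k\<le>L. card ({1..k} - U) \<le> card (U \<inter> {1..k})"
    and j: "j < length (sorted_list_of_set U)" "j < length (sorted_list_of_set ({1..L} - U))"
  shows "sorted_list_of_set U ! j < sorted_list_of_set ({1..L} - U) ! j"
proof (rule ccontr)
  define u where "u = sorted_list_of_set U"
  define d where "d = sorted_list_of_set ({1..L} - U)"
  have fU: "finite U" using U finite_subset by blast
  have su: "sorted_wrt (<) u" "set u = U" using fU by (auto simp: u_def)
  have sd: "sorted_wrt (<) d" "set d = {1..L} - U" by (auto simp: d_def)
  define y where "y = d ! j"
  have "y \<in> set d" unfolding y_def using j(2) by (intro nth_mem) (simp add: d_def)
  then have yD: "y \<in> {1..L} - U" using sd by simp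
  assume "\<not> sorted_list_of_set U ! j < sorted_list_of_set ({1..L} - U) ! j"
  then have uy: "y \<le> u ! j" by (simp add: u_def d_def y_def)
  have "j + 1 = card (nth d ` {..j})"
  proof -
    have "inj_on (nth d) {..j}"
      using sd(1) j unfolding d_def[symmetric]
      by (intro inj_onI) (metis atMost_iff le_less_trans nat_neq_iff sorted_wrt_nth_less)
    then show ?thesis by (simp add: card_image)
  qed
  also have "\<dots> \<le> card ({1..y} - U)"
  proof (rule card_mono)
    show "nth d ` {..j} \<subseteq> {1..y} - U"
    proof
      fix x assume "x \<in> nth d ` {..j}"
      then obtain i where i: "i \<le> j" "x = d ! i" by auto
      have "x \<in> set d" unfolding i(2) by (rule nth_mem) (use i j(2) in \<open>simp add: d_def\<close>)
      moreover have "x \<le> y" using i sd(1) j unfolding y_def d_def[symmetric]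
        by (metis order.order_iff_strict sorted_wrt_nth_less)
      ultimately show "x \<in> {1..y} - U" using sd by auto
    qed
  qed simp
  also have "\<dots> \<le> card (U \<inter> {1..y})" using bal yD by auto
  also have "\<dots> \<le> card (nth u ` {..<j})"
  proof (rule card_mono)
    show "U \<inter> {1..y} \<subseteq> nth u ` {..<j}"
    proof
      fix x assume x: "x \<in> U \<inter> {1..y}"
      then obtain m where m: "m < length u" "x = u ! m" using su by (metis IntD1 in_set_conv_nth)
      have "m < j"
      proof (rule ccontr)
        assume "\<not> m < j"
        then have "u ! j \<le> u ! m" using su(1) m(1)
          by (metis linorder_not_less order.order_iff_strict sorted_wrt_nth_less)
        then have "x = y" using x m uy by auto
        then show False using x yD by auto
      qed
      then show "x \<in> nth u ` {..<j}" using m by auto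
    qed
  qed simp
  also have "\<dots> \<le> j" using card_image_le[of "{..<j}" "nth u"] by simp
  finally show False by simp
qed


lemma image_nth_shift: "length xs = n \<Longrightarrow> (\<lambda>b. xs ! (b-1)) ` {1..n} = set xs"
proof (intro set_eqI iffI)
  fix x assume "length xs = n" "x \<in> (\<lambda>b. xs ! (b-1)) ` {1..n}"
  then show "x \<in> set xs" by auto
next
  fix x assume n: "length xs = n" and "x \<in> set xs"
  then obtain j where j: "j < n" "x = xs ! j" by (auto simp: in_set_conv_nth)
  then have "x = (\<lambda>b. xs ! (b-1)) (Suc j)" "Suc j \<in> {1..n}" by auto
  then show "x \<in> (\<lambda>b. xs ! (b-1)) ` {1..n}" by blast
qed

lemma card_cells: "card (cells n) = 2 * n"
  by (simp add: cells_def card_cartesian_product)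

lemma dec_props:
  assumes w: "w \<in> G 0 n n"
  shows "is_syt n (dec n w) \<and> word n (dec n w) = w"
proof -
  define U where "U = upset (2*n) w"
  define T where "T = dec n w"
  have lw: "length w = 2*n" using G_length[OF w] by simp
  have U12: "U \<subseteq> {1..2*n}" by (auto simp: U_def upset_def)
  have wU: "w = wordS (2*n) U" using wordS_upset[OF lw] by (simp add: U_def)
  have dn: "dnset (2*n) w = {1..2*n} - U" by (simp add: U_def upset_dnset)
  have cU: "card U = n"
  proof -
    have "n = ups (take (2*n) (wordS (2*n) U))" using w wU by (simp add: G_def)
    also have "\<dots> = card (U \<inter> {1..2*n})" by (rule ups_wordS) simp
    finally show ?thesis using U12 by (simp add: Int_absorb2)
  qed
  have cD: "card ({1..2*n} - U) = n"
  proof -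
    have "n = dns (take (2*n) (wordS (2*n) U))" using w wU by (simp add: G_def)
    also have "\<dots> = card ({1..2*n} - U)" by (rule dns_wordS) simp
    finally show ?thesis by simp
  qed
  have bal: "\<forall>k\<le>2*n. card ({1..k} - U) \<le> card (U \<inter> {1..k})"
  proof (intro allI impI)
    fix k assume k: "k \<le> 2*n"
    have "ok 0 w" using w by (simp add: G_def)
    then have "dns (take k w) \<le> 0 + ups (take k w)" using k lw unfolding ok_take by auto
    then show "card ({1..k} - U) \<le> card (U \<inter> {1..k})"
      using k by (simp add: wU ups_wordS dns_wordS)
  qed
  define u where "u = sorted_list_of_set U"
  define d where "d = sorted_list_of_set ({1..2*n} - U)"
  have fU: "finite U" using U12 finite_subset by blast
  have lu: "length u = n" using cU by (simp add: u_def)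
  have ld: "length d = n" using cD by (simp add: d_def)
  have su: "sorted_wrt (<) u" "set u = U" using fU by (auto simp: u_def)
  have sd: "sorted_wrt (<) d" "set d = {1..2*n} - U" by (auto simp: d_def)
  have T1: "T 1 b = u ! (b-1)" if "b \<in> {1..n}" for b
    using that by (simp add: T_def dec_def cells_def U_def u_def)
  have T2: "T 2 b = d ! (b-1)" if "b \<in> {1..n}" for b
    using that by (simp add: T_def dec_def cells_def dn d_def)
  have im1: "T 1 ` {1..n} = U"
  proof -
    have "T 1 ` {1..n} = (\<lambda>b. u ! (b-1)) ` {1..n}" using T1 by (rule image_cong[OF refl])
    also have "\<dots> = U" using image_nth_shift[OF lu] su by simp
    finally show ?thesis .
  qed
  have im2: "T 2 ` {1..n} = {1..2*n} - U"
  proof -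
    have "T 2 ` {1..n} = (\<lambda>b. d ! (b-1)) ` {1..n}" using T2 by (rule image_cong[OF refl])
    also have "\<dots> = {1..2*n} - U" using image_nth_shift[OF ld] sd by simp
    finally show ?thesis .
  qed
  have wd: "word n T = w" using im1 wU by (simp add: word_def)
  have imc: "(\<lambda>(a,b). T a b) ` cells n = {1..2*n}"
  proof -
    have "(\<lambda>(a,b). T a b) ` cells n = T 1 ` {1..n} \<union> T 2 ` {1..n}"
      by (auto simp: cells_def image_iff)
    then show ?thesis using im1 im2 U12 by auto
  qed
  have bij: "bij_betw (\<lambda>(a,b). T a b) (cells n) {1..2*n}"
    unfolding bij_betw_def
  proof
    show "inj_on (\<lambda>(a,b). T a b) (cells n)"
    proof (rule eq_card_imp_inj_on)
      show "finite (cells n)" by (simp add: cells_def)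
      show "card ((\<lambda>(a,b). T a b) ` cells n) = card (cells n)"
        unfolding imc card_cells by simp
    qed
  qed (rule imc)
  have zero: "\<forall>a b. (a,b) \<notin> cells n \<longrightarrow> T a b = 0" by (simp add: T_def dec_def)
  have row: "\<forall>a b. (a,b) \<in> cells n \<longrightarrow> (a, Suc b) \<in> cells n \<longrightarrow> T a b < T a (Suc b)"
  proof (intro allI impI)
    fix a b assume ab: "(a,b) \<in> cells n" "(a, Suc b) \<in> cells n"
    then have b: "1 \<le> b" "Suc b \<le> n" and a: "a = 1 \<or> a = 2" by (auto simp: cells_def)
    show "T a b < T a (Suc b)"
    proof (cases "a = 1")
      case True
      have "u ! (b-1) < u ! b" using sorted_wrt_nth_less[OF su(1), of "b-1" b] b lu by simp
      then show ?thesis using True T1 b by simp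
    next
      case False
      then have "a = 2" using a by simp
      have "d ! (b-1) < d ! b" using sorted_wrt_nth_less[OF sd(1), of "b-1" b] b ld by simp
      then show ?thesis using \<open>a = 2\<close> T2 b by simp
    qed
  qed
  have col: "\<forall>b. (1,b) \<in> cells n \<longrightarrow> (2,b) \<in> cells n \<longrightarrow> T 1 b < T 2 b"
  proof (intro allI impI)
    fix b assume "(1,b) \<in> cells n" "(2::nat,b) \<in> cells n"
    then have b: "b \<in> {1..n}" by (auto simp: cells_def)
    have "u ! (b-1) < d ! (b-1)"
      unfolding u_def d_def
      by (rule col_lemma[OF U12 bal]) (use b lu ld in \<open>auto simp: u_def d_def\<close>)
    then show "T 1 b < T 2 b" using T1 T2 b by simp
  qed
  have "is_syt n T" unfolding is_syt_def using bij zero row col by blast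
  then show ?thesis using wd by (simp add: T_def)
qed

lemma syt_bij: "bij_betw (word n) (syt n) (G 0 n n)"
  by (rule bij_betw_byWitness[where f'="dec n"])
     (auto simp: syt_def dec_word word_G dec_props)


lemma pos_lemma:
  assumes T: "is_syt n T" and b: "b \<in> {1..n}"
  shows "card (T 1 ` {1..n} \<inter> {1..T 1 b - 1}) = b - 1"
proof -
  have eq: "T 1 ` {1..n} \<inter> {1..T 1 b - 1} = T 1 ` {1..b-1}"
  proof (intro set_eqI iffI)
    fix x assume "x \<in> T 1 ` {1..n} \<inter> {1..T 1 b - 1}"
    then obtain b' where b': "b' \<in> {1..n}" "x = T 1 b'" "T 1 b' < T 1 b" by auto
    then have "b' < b" using syt_mono_iff[OF T _ b'(1) b] by simp
    then show "x \<in> T 1 ` {1..b-1}" using b' by auto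
  next
    fix x assume "x \<in> T 1 ` {1..b-1}"
    then obtain b' where b': "b' \<in> {1..b-1}" "x = T 1 b'" by auto
    then have "b' \<in> {1..n}" "b' < b" using b by auto
    then have "T 1 b' < T 1 b" "T 1 b' \<in> {1..2*n}"
      using syt_mono_iff[OF T _ _ b] syt_range[OF T, of 1 b'] by (auto simp: cells_def)
    then show "x \<in> T 1 ` {1..n} \<inter> {1..T 1 b - 1}" using b' \<open>b' \<in> {1..n}\<close> by auto
  qed
  have "inj_on (T 1) {1..b-1}" by (rule inj_on_subset[OF syt_inj[OF T, of 1]]) (use b in auto)
  then show ?thesis unfolding eq by (simp add: card_image)
qed

lemma pos_char:
  assumes T: "is_syt n T" and i: "1 \<le> i" "i \<le> n"
  shows "T 1 i = r \<longleftrightarrow> (1 \<le> r \<and> r \<le> 2*n \<and> word n T ! (r-1) \<and> ups (take (r-1) (word n T)) = i-1)"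
proof -
  define U where "U = T 1 ` {1..n}"
  have w: "word n T = wordS (2*n) U" by (simp add: word_def U_def)
  show ?thesis
  proof
    assume r: "T 1 i = r"
    have "r \<in> {1..2*n}" using syt_range[OF T, of 1 i] i r by (auto simp: cells_def)
    moreover have "r \<in> U" using r i by (auto simp: U_def)
    moreover have "card (U \<inter> {1..r-1}) = i - 1" using pos_lemma[OF T, of i] i r by (simp add: U_def)
    ultimately show "1 \<le> r \<and> r \<le> 2*n \<and> word n T ! (r-1) \<and> ups (take (r-1) (word n T)) = i-1"
      using wordS_nth[of r "2*n" U] ups_wordS[of "r - 1" "2*n" U] by (simp add: w le_diff_conv)
  next
    assume H: "1 \<le> r \<and> r \<le> 2*n \<and> word n T ! (r-1) \<and> ups (take (r-1) (word n T)) = i-1"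
    then have "r \<in> U" "card (U \<inter> {1..r-1}) = i - 1"
      using wordS_nth[of r "2*n" U] ups_wordS[of "r - 1" "2*n" U] by (auto simp: w le_diff_conv)
    then obtain b where b: "b \<in> {1..n}" "r = T 1 b" by (auto simp: U_def)
    then have "b - 1 = i - 1" using pos_lemma[OF T b(1)] \<open>card (U \<inter> {1..r-1}) = i - 1\<close>
      by (simp add: U_def)
    then have "b = i" using b i by auto
    then show "T 1 i = r" using b by simp
  qed
qed

lemma pos_range:
  assumes T: "is_syt n T" and i: "1 \<le> i" "i \<le> n"
  shows "T 1 i \<in> {i..2*i-1}"
proof -
  define r where "r = T 1 i"
  have H: "1 \<le> r \<and> r \<le> 2*n \<and> word n T ! (r-1) \<and> ups (take (r-1) (word n T)) = i-1"
    using pos_char[OF T i, of r] by (simp add: r_def)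
  have wG: "word n T \<in> G 0 n n" using word_G[OF T] .
  then have lw: "length (word n T) = 2*n" using G_length by fastforce
  have "ok 0 (word n T)" using wG by (simp add: G_def)
  then have "dns (take (r-1) (word n T)) \<le> 0 + ups (take (r-1) (word n T))"
    using H lw ok_take[THEN iffD1, rule_format, of 0 "word n T" "r-1"] by (simp add: le_diff_conv)
  moreover have "ups (take (r-1) (word n T)) + dns (take (r-1) (word n T)) = r - 1"
    using ups_dns_len[of "take (r-1) (word n T)"] H lw by (auto simp: min_def)
  ultimately show ?thesis using H i by (auto simp: r_def)
qed

lemma count_words:
  assumes i: "1 \<le> i" "i \<le> n"
  shows "card {T\<in>syt n. T 1 i = r} =
    card {w\<in>G 0 n n. 1 \<le> r \<and> r \<le> 2*n \<and> w ! (r-1) \<and> ups (take (r-1) w) = i-1}"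
proof -
  have inj: "inj_on (word n) {T\<in>syt n. T 1 i = r}"
    using syt_bij[of n] unfolding bij_betw_def by (auto intro: inj_on_subset)
  have "word n ` {T\<in>syt n. T 1 i = r} =
    {w\<in>G 0 n n. 1 \<le> r \<and> r \<le> 2*n \<and> w ! (r-1) \<and> ups (take (r-1) w) = i-1}"
  proof (intro set_eqI iffI)
    fix w assume "w \<in> word n ` {T\<in>syt n. T 1 i = r}"
    then obtain T where T: "is_syt n T" "T 1 i = r" "w = word n T" by (auto simp: syt_def)
    then show "w \<in> {w\<in>G 0 n n. 1 \<le> r \<and> r \<le> 2*n \<and> w ! (r-1) \<and> ups (take (r-1) w) = i-1}"
      using pos_char[OF T(1) i, of r] word_G[OF T(1)] by simp
  next
    fix w assume w: "w \<in> {w\<in>G 0 n n. 1 \<le> r \<and> r \<le> 2*n \<and> w ! (r-1) \<and> ups (take (r-1) w) = i-1}"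
    then have "w \<in> G 0 n n" by simp
    from dec_props[OF this] have D: "is_syt n (dec n w)" "word n (dec n w) = w" by auto
    then have "dec n w 1 i = r" using pos_char[OF D(1) i, of r] w by simp
    then show "w \<in> word n ` {T\<in>syt n. T 1 i = r}"
      using D by (auto simp: syt_def image_iff intro!: exI[of _ "dec n w"])
  qed
  then show ?thesis using card_image[OF inj] by simp
qed

lemma split_words:
  assumes i: "1 \<le> i" "i \<le> r" "r \<le> 2*i-1" "2*i \<le> n"
  shows "{w\<in>G 0 n n. 1 \<le> r \<and> r \<le> 2*n \<and> w ! (r-1) \<and> ups (take (r-1) w) = i-1}
    = (\<lambda>(u,v). u @ True # v) ` (G 0 (i-1) (r-i) \<times> G (2*i-r) (n-i) (n-r+i))"
proof (intro set_eqI iffI)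
  fix w assume w: "w \<in> {w\<in>G 0 n n. 1 \<le> r \<and> r \<le> 2*n \<and> w ! (r-1) \<and> ups (take (r-1) w) = i-1}"
  define u where "u = take (r-1) w"
  define v where "v = drop r w"
  have lw: "length w = 2*n" using w G_length by fastforce
  have wsplit: "w = u @ True # v"
    using id_take_nth_drop[of "r-1" w] w lw i by (simp add: u_def v_def)
  have lu: "length u = r - 1" using lw i by (simp add: u_def)
  have uu: "ups u = i - 1" using w by (simp add: u_def)
  have du: "dns u = r - i" using ups_dns_len[of u] lu uu i by simp
  have uw: "ups w = n" "dns w = n" "ok 0 w" using w by (auto simp: G_def)
  have uv: "ups v = n - i" using uw wsplit uu i by simp
  have dv: "dns v = n - r + i" using uw wsplit du i by simp
  have oku: "ok 0 u" and okv: "ok (Suc (0 + ups u - dns u)) v"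
    using uw(3) unfolding wsplit ok_append by auto
  have e: "Suc (0 + ups u - dns u) = 2*i - r" using uu du i by simp
  have "u \<in> G 0 (i-1) (r-i)" "v \<in> G (2*i-r) (n-i) (n-r+i)"
    using oku okv[unfolded e] uu du uv dv by (auto simp: G_def)
  then show "w \<in> (\<lambda>(u,v). u @ True # v) ` (G 0 (i-1) (r-i) \<times> G (2*i-r) (n-i) (n-r+i))"
    unfolding wsplit by (intro image_eqI[of _ _ "(u,v)"]) auto
next
  fix w assume "w \<in> (\<lambda>(u,v). u @ True # v) ` (G 0 (i-1) (r-i) \<times> G (2*i-r) (n-i) (n-r+i))"
  then obtain u v where uv: "u \<in> G 0 (i-1) (r-i)" "v \<in> G (2*i-r) (n-i) (n-r+i)" "w = u @ True # v"
    by auto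
  have lu: "length u = r - 1" using G_length[OF uv(1)] i by simp
  have lv: "length v = 2*n - r" using G_length[OF uv(2)] i by simp
  have uu: "ups u = i - 1" "dns u = r - i" "ok 0 u" using uv(1) by (auto simp: G_def)
  have vv: "ups v = n - i" "dns v = n - r + i" "ok (2*i-r) v" using uv(2) by (auto simp: G_def)
  have e: "Suc (0 + ups u - dns u) = 2*i - r" using uu i by simp
  have "ok 0 w" unfolding uv(3) ok_append using uu(3) vv(3) by (simp only: ok.simps e)
  moreover have "ups w = n" "dns w = n" using uu vv i unfolding uv(3) by auto
  moreover have "w ! (r-1)" "take (r-1) w = u" unfolding uv(3) lu[symmetric] by auto
  ultimately show "w \<in> {w\<in>G 0 n n. 1 \<le> r \<and> r \<le> 2*n \<and> w ! (r-1) \<and> ups (take (r-1) w) = i-1}"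
    using i uu by (auto simp: G_def)
qed

lemma card_split:
  assumes i: "1 \<le> i" "i \<le> r" "r \<le> 2*i-1" "2*i \<le> n"
  shows "card {T\<in>syt n. T 1 i = r} = card (G 0 (i-1) (r-i)) * card (G (2*i-r) (n-i) (n-r+i))"
proof -
  have inj: "inj_on (\<lambda>(u,v). u @ True # v) (G 0 (i-1) (r-i) \<times> G (2*i-r) (n-i) (n-r+i))"
  proof (intro inj_onI)
    fix x y assume x: "x \<in> G 0 (i-1) (r-i) \<times> G (2*i-r) (n-i) (n-r+i)"
      and y: "y \<in> G 0 (i-1) (r-i) \<times> G (2*i-r) (n-i) (n-r+i)"
      and eq: "(\<lambda>(u,v). u @ True # v) x = (\<lambda>(u,v). u @ True # v) y"
    obtain u v u' v' where xy: "x = (u,v)" "y = (u',v')" by fastforce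
    have "length u = length u'" using x y xy G_length by fastforce
    then show "x = y" using eq xy by auto
  qed
  have "card {T\<in>syt n. T 1 i = r} =
    card {w\<in>G 0 n n. 1 \<le> r \<and> r \<le> 2*n \<and> w ! (r-1) \<and> ups (take (r-1) w) = i-1}"
    using count_words[of i n r] i by simp
  also have "\<dots> = card ((\<lambda>(u,v). u @ True # v) ` (G 0 (i-1) (r-i) \<times> G (2*i-r) (n-i) (n-r+i)))"
    unfolding split_words[OF i] ..
  also have "\<dots> = card (G 0 (i-1) (r-i) \<times> G (2*i-r) (n-i) (n-r+i))"
    by (rule card_image[OF inj])
  finally show ?thesis unfolding card_cartesian_product .
qed

lemma card_syt: "card (syt n) = card (G 0 n n)"
  using bij_betw_same_card[OF syt_bij] .

lemma sum_prob:
  assumes i: "1 \<le> i" "i \<le> n"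
  shows "(\<Sum>r\<in>{i..2*i-1}. card {T\<in>syt n. T 1 i = r}) = card (syt n)"
proof -
  have fin: "finite (syt n)" using bij_betw_finite[OF syt_bij] finite_G by blast
  have "card (syt n) = card (\<Union>r\<in>{i..2*i-1}. {T\<in>syt n. T 1 i = r})"
    using pos_range[OF _ i] by (intro arg_cong[where f=card]) (auto simp: syt_def)
  also have "\<dots> = (\<Sum>r\<in>{i..2*i-1}. card {T\<in>syt n. T 1 i = r})"
    by (rule card_UN_disjoint) (use fin in auto)
  finally show ?thesis by simp
qed


definition Pk :: "nat \<Rightarrow> nat \<Rightarrow> real" where
  "Pk k N = (\<Prod>j<k. real N - real j)"

lemma fact_Pk: "k \<le> N \<Longrightarrow> (fact N :: real) = fact (N - k) * Pk k N"
proof (induction k)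
  case 0 then show ?case by (simp add: Pk_def)
next
  case (Suc k)
  have e: "N - k = Suc (N - Suc k)" using Suc.prems by simp
  have "(fact N :: real) = fact (N - k) * Pk k N" using Suc by simp
  also have "fact (N - k) = (real N - real k) * (fact (N - Suc k) :: real)"
    unfolding e fact_Suc using Suc.prems by (simp add: of_nat_diff)
  finally show ?case by (simp add: Pk_def)
qed

lemma Pk_pos: "k \<le> N \<Longrightarrow> Pk k N > 0"
  unfolding Pk_def by (intro prod_pos) auto

lemma Pk_lim: "(\<lambda>N. Pk k N / real N ^ k) \<longlonglongrightarrow> 1"
proof -
  have lim: "(\<lambda>N. \<Prod>j<k. 1 - real j / real N) \<longlonglongrightarrow> (\<Prod>j<k. 1 - 0)"
    by (intro tendsto_prod tendsto_diff tendsto_const lim_const_over_n)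
  have ev: "\<forall>\<^sub>F N in sequentially. (\<Prod>j<k. 1 - real j / real N) = Pk k N / real N ^ k"
    using eventually_gt_at_top[of 0]
  proof eventually_elim
    case (elim N)
    have "(\<Prod>j<k. 1 - real j / real N) = (\<Prod>j<k. (real N - real j) / real N)"
      using elim by (intro prod.cong) (auto simp: field_simps)
    also have "\<dots> = Pk k N / real N ^ k"
      by (simp add: prod_dividef Pk_def)
    finally show ?case .
  qed
  show ?thesis using Lim_transform_eventually[OF lim ev] by simp
qed

lemma Pk_lim2: "(\<lambda>n. Pk k (2*n) / real (2*n) ^ k) \<longlonglongrightarrow> 1"
proof -
  have "strict_mono (\<lambda>n::nat. 2*n)" by (auto simp: strict_mono_def)
  from LIMSEQ_subseq_LIMSEQ[OF Pk_lim this] show ?thesis by (simp add: o_def)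
qed

lemma Pk_lim1: "(\<lambda>n. Pk k (n+1) / real (n+1) ^ k) \<longlonglongrightarrow> 1"
  using LIMSEQ_Suc[OF Pk_lim[of k]] by simp

lemma cardG_closed:
  assumes a: "1 \<le> a"
  shows "real (card (G h a (a+h))) = (real h + 1) * fact (2*a+h) / (fact a * fact (a+h+1))"
proof -
  obtain a' where a': "a = Suc a'" using a by (cases a) auto
  have "int (card (G h a (a+h))) = NG h a (a+h)" by (rule card_G) simp
  also have "\<dots> = int ((2*a+h) choose (a+h)) - int ((2*a+h) choose a')"
  proof -
    have e1: "a + (a+h) = 2*a+h" by simp
    have e2: "a + h - h - 1 = a'" using a' by simp
    have c: "h + 1 \<le> a + h" using a by simp
    show ?thesis unfolding NG_def e1 e2 using c by (simp del: binomial_Suc_Suc)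
  qed
  finally have "real (card (G h a (a+h))) = real ((2*a+h) choose (a+h)) - real ((2*a+h) choose a')"
    by (metis of_int_diff of_int_of_nat_eq)
  also have "\<dots> = fact (2*a+h) / (fact (a+h) * fact a) - fact (2*a+h) / (fact a' * fact (a+h+1))"
  proof -
    have s1: "2*a+h - (a+h) = a" by simp
    have s2: "2*a+h - a' = a+h+1" using a' by simp
    have "a' \<le> 2*a+h" using a' by simp
    then show ?thesis
      using binomial_fact[of "a+h" "2*a+h", where 'a=real] binomial_fact[of a' "2*a+h", where 'a=real]
      unfolding s1 s2 by (simp add: mult.commute del: binomial_Suc_Suc)
  qed
  also have "\<dots> = (real h + 1) * fact (2*a+h) / (fact a * fact (a+h+1))"
  proof -
    have f1: "(fact a :: real) = real a * fact a'" using a' by simp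
    have f2: "(fact (a+h+1) :: real) = real (a+h+1) * fact (a+h)" by simp
    have alg: "X / (Y * (A * Z)) - X / (Z * (B * Y)) = (B - A) * X / ((A * Z) * (B * Y))"
      if "A > 0" "B > 0" "Y > 0" "Z > 0" for X Y Z A B :: real
      using that by (simp add: field_simps)
    have "real (a+h+1) - real a = real h + 1" by simp
    then show ?thesis unfolding f1 f2
      using alg[of "real a" "real (a+h+1)" "fact (a+h)" "fact a'" "fact (2*a+h)"] a' by simp
  qed
  finally show ?thesis .
qed


lemma alg2: "H*a*b/c = H*(a/N^i)*(b/(N+1)^s)/(c/(2*N)^(i+s))*((1/2)^(i+s)*((N+1)/N)^s)"
  if "N > 0" "c > 0" for H a b c N :: real
proof -
  have "(2*N)^(i+s) * (1/2)^(i+s) = (2*N*(1/2))^(i+s)" by (rule power_mult_distrib[symmetric])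
  also have "\<dots> = N^i * N^s" by (simp add: power_add)
  finally have e1: "(2*N)^(i+s) * (1/2)^(i+s) = N^i * N^s" .
  have e2: "((N+1)/N)^s = (N+1)^s / N^s" by (simp add: power_divide)
  have p: "N^i > 0" "N^s > 0" "(N+1)^s > 0" using that by auto
  have "H*(a/N^i)*(b/(N+1)^s)/(c/(2*N)^(i+s))*((1/2)^(i+s)*((N+1)/N)^s)
     = H*a*b/c * (((2*N)^(i+s) * (1/2)^(i+s)) * (N+1)^s / (N^i * (N+1)^s * N^s))"
    unfolding e2 using p that by (simp add: field_simps)
  also have "\<dots> = H*a*b/c"
  proof -
    have "(N^i * N^s) * (N+1)^s / (N^i * (N+1)^s * N^s) = 1" using p that by (simp add: field_simps)
    then show ?thesis unfolding e1 by simp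
  qed
  finally show ?thesis by simp
qed

lemma alg3: "(c * (H * F1 / (Fa * Fb))) / (F1 * Pr / (Fa * Pi * (Fb * Pri))) = c * (H * Pi * Pri / Pr)"
  if "F1 > 0" "Fa > 0" "Fb > 0" "Pr > 0" "Pi > 0" "Pri > 0" for c H F1 Fa Fb Pr Pi Pri :: real
  using that by (simp add: field_simps)

lemma prob_eq:
  assumes i: "1 \<le> i" "i \<le> r" "r \<le> 2*i-1" "2*i \<le> n"
  shows "syt_prob n i r = real (card (G 0 (i-1) (r-i))) *
     ((real (2*i-r) + 1) * Pk i n * Pk (r-i) (n+1) / Pk r (2*n))"
proof -
  define c where "c = real (card (G 0 (i-1) (r-i)))"
  define h where "h = 2*i - r"
  define a where "a = n - i"
  have a1: "1 \<le> a" using i by (simp add: a_def)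
  have e: "n - r + i = a + h" using i by (simp add: a_def h_def)
  have e2: "2*a+h = 2*n - r" "a+h+1 = n-r+i+1" using i by (simp_all add: a_def h_def)
  have num: "real (card {T\<in>syt n. T 1 i = r}) = c * ((real h + 1) * fact (2*n-r) / (fact (n-i) * fact (n-r+i+1)))"
  proof -
    have cs: "card {T\<in>syt n. T 1 i = r} = card (G 0 (i-1) (r-i)) * card (G h a (a+h))"
      using card_split[OF i] unfolding h_def[symmetric] a_def[symmetric] e .
    have "real (card (G h a (a+h))) = (real h + 1) * fact (2*n-r) / (fact (n-i) * fact (n-r+i+1))"
      using cardG_closed[OF a1, of h] by (simp only: e2) (simp add: a_def)
    then show ?thesis unfolding cs c_def by simp
  qed
  have den: "real (card (syt n)) = fact (2*n) / (fact n * fact (n+1))"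
    using cardG_closed[of n 0] i by (simp add: card_syt)
  have f1: "(fact (2*n) :: real) = fact (2*n-r) * Pk r (2*n)" using fact_Pk[of r "2*n"] i by simp
  have f2: "(fact n :: real) = fact (n-i) * Pk i n" using fact_Pk[of i n] i by simp
  have f3: "(fact (n+1) :: real) = fact (n-r+i+1) * Pk (r-i) (n+1)"
  proof -
    have "n + 1 - (r - i) = n-r+i+1" using i by simp
    then show ?thesis using fact_Pk[of "r-i" "n+1"] i by simp
  qed
  have pos: "Pk r (2*n) > 0" "Pk i n > 0" "Pk (r-i) (n+1) > 0" using i by (auto intro!: Pk_pos)
  have "syt_prob n i r = c * ((real h + 1) * fact (2*n-r) / (fact (n-i) * fact (n-r+i+1)))
      / (fact (2*n-r) * Pk r (2*n) / (fact (n-i) * Pk i n * (fact (n-r+i+1) * Pk (r-i) (n+1))))"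
    unfolding syt_prob_def num den f1 f2 f3 by simp
  also have "\<dots> = c * ((real h + 1) * Pk i n * Pk (r-i) (n+1) / Pk r (2*n))"
    by (rule alg3) (use pos in auto)
  finally show ?thesis by (simp add: c_def h_def)
qed

lemma Pk_lim1': "(\<lambda>n. Pk k (n+1) / (real n + 1) ^ k) \<longlonglongrightarrow> 1"
  using Pk_lim1[of k] by (simp add: add.commute)

lemma Pk_lim2': "(\<lambda>n. Pk k (2*n) / (2 * real n) ^ k) \<longlonglongrightarrow> 1"
  using Pk_lim2[of k] by simp

lemma Suc_over': "(\<lambda>n. (real n + 1) / real n) \<longlonglongrightarrow> 1"
  using LIMSEQ_Suc_n_over_n[where 'a=real] by (simp add: add.commute)

lemma ratio_lim:
  assumes "i \<le> r"
  shows "(\<lambda>n. H * Pk i n * Pk (r-i) (n+1) / Pk r (2*n)) \<longlonglongrightarrow> H * (1/2)^r"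
proof -
  define s where "s = r - i"
  have r: "r = i + s" using assms by (simp add: s_def)
  have lim: "(\<lambda>n. H*(Pk i n/(real n)^i)*(Pk s (n+1)/(real n+1)^s)/(Pk (i+s) (2*n)/(2*real n)^(i+s))*((1/2)^(i+s)*((real n+1)/real n)^s))
      \<longlonglongrightarrow> H * 1 * 1 / 1 * ((1/2)^(i+s) * 1^s)"
    by (intro tendsto_intros Pk_lim Pk_lim1' Pk_lim2' Suc_over') simp
  have ev: "\<forall>\<^sub>F n in sequentially. H*(Pk i n/(real n)^i)*(Pk s (n+1)/(real n+1)^s)/(Pk (i+s) (2*n)/(2*real n)^(i+s))*((1/2)^(i+s)*((real n+1)/real n)^s)
      = H * Pk i n * Pk s (n+1) / Pk (i+s) (2*n)"
    using eventually_ge_at_top[of "i+s+1"]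
  proof eventually_elim
    case (elim n)
    have "Pk (i+s) (2*n) > 0" using elim by (intro Pk_pos) simp
    then show ?case using elim by (intro alg2[symmetric]) auto
  qed
  show ?thesis using Lim_transform_eventually[OF lim ev] unfolding r[symmetric] s_def using assms by simp
qed

lemma prob_lim:
  assumes i: "1 \<le> i" "i \<le> r" "r \<le> 2*i-1"
  shows "(\<lambda>n. syt_prob n i r) \<longlonglongrightarrow> real (card (G 0 (i-1) (r-i))) * ((real (2*i-r) + 1) * (1/2)^r)"
proof -
  have lim: "(\<lambda>n. real (card (G 0 (i-1) (r-i))) * ((real (2*i-r) + 1) * Pk i n * Pk (r-i) (n+1) / Pk r (2*n)))
     \<longlonglongrightarrow> real (card (G 0 (i-1) (r-i))) * ((real (2*i-r) + 1) * (1/2)^r)"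
    by (intro tendsto_mult tendsto_const ratio_lim) (use i in simp)
  have ev: "\<forall>\<^sub>F n in sequentially. real (card (G 0 (i-1) (r-i))) * ((real (2*i-r) + 1) * Pk i n * Pk (r-i) (n+1) / Pk r (2*n))
      = syt_prob n i r"
    using eventually_ge_at_top[of "2*i"] by eventually_elim (simp add: prob_eq[OF i])
  show ?thesis using Lim_transform_eventually[OF lim ev] .
qed


definition hh :: "nat \<Rightarrow> nat \<Rightarrow> real" where
  "hh i K = fact (i+K) / (fact K * fact i) * (1/2)^K"

definition tt :: "nat \<Rightarrow> nat \<Rightarrow> real" where
  "tt i k = (real i - real k) * (real i + 1 - real k) / (real i + real k) * hh i k"

definition R1 :: "nat \<Rightarrow> nat \<Rightarrow> real" where
  "R1 i K = -(real i+1)*(real i+2) + (2*real i-1)*real K - real K ^ 2"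

definition R2 :: "nat \<Rightarrow> nat \<Rightarrow> real" where
  "R2 i K = -(real i+1)*(real i^2+10*real i+10) + (real i^2+8*real i-4)*real K
     + (real i-5)*real K^2 - real K^3"

lemma hh_pos: "hh i K > 0" by (simp add: hh_def)

lemma hh_Suc: "hh i (Suc K) = hh i K * (real i + real K + 1) / (2 * (real K + 1))"
proof -
  have "fact (i + Suc K) = (real i + real K + 1) * (fact (i+K) :: real)"
    by (simp add: algebra_simps)
  moreover have "fact (Suc K) = (real K + 1) * (fact K :: real)" by (simp add: algebra_simps)
  ultimately show ?thesis by (simp add: hh_def field_simps)
qed

lemma tt_Suc: "i \<ge> 1 \<Longrightarrow> tt i (Suc K) = (real i - real K - 1) * (real i - real K) / (2 * (real K + 1)) * hh i K"
proof -
  assume i: "i \<ge> 1"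
  have p: "real i + real K + 1 \<noteq> 0" by simp
  have g: "a / D * (h * D / E) = a / E * h" if "D \<noteq> 0" for a D h E :: real
    using that by (simp add: field_simps)
  have e: "real (Suc K) = real K + 1" by simp
  have "tt i (Suc K) = ((real i - (real K + 1)) * (real i + 1 - (real K + 1))) / (real i + (real K + 1))
     * (hh i K * (real i + (real K + 1)) / (2 * (real K + 1)))"
    unfolding tt_def hh_Suc e add.assoc ..
  also have "\<dots> = ((real i - (real K + 1)) * (real i + 1 - (real K + 1))) / (2 * (real K + 1)) * hh i K"
    by (rule g) (use p in \<open>simp add: add.assoc\<close>)
  finally show ?thesis by (simp add: algebra_simps)
qed

lemma gos_step:
  assumes i: "i \<ge> 1"
    and poly: "2*(real K+1)*R K + (q (Suc K))*(real i - real K - 1)*(real i - real K)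
               = (real i + real K + 1) * R (Suc K)"
  shows "R K * hh i K + q (Suc K) * tt i (Suc K) = R (Suc K) * hh i (Suc K)"
proof -
  have h: "hh i K > 0" by (rule hh_pos)
  have "R K * hh i K + q (Suc K) * tt i (Suc K)
      = hh i K * (2*(real K+1)*R K + (q (Suc K))*(real i - real K - 1)*(real i - real K)) / (2*(real K+1))"
    unfolding tt_Suc[OF i] by (simp add: field_simps)
  also have "\<dots> = hh i K * ((real i + real K + 1) * R (Suc K)) / (2*(real K+1))" unfolding poly ..
  also have "\<dots> = R (Suc K) * hh i (Suc K)" unfolding hh_Suc by (simp add: field_simps)
  finally show ?thesis .
qed

lemma gos1:
  assumes i: "i \<ge> 1"
  shows "(\<Sum>k\<le>K. (real k - (real i + 2)) * tt i k) = R1 i K * hh i K"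
proof (induction K)
  case 0
  have "tt i 0 = real i + 1" using i by (simp add: tt_def hh_def)
  then show ?case by (simp add: R1_def hh_def algebra_simps)
next
  case (Suc K)
  have "(\<Sum>k\<le>Suc K. (real k - (real i + 2)) * tt i k) = R1 i K * hh i K + (real (Suc K) - (real i + 2)) * tt i (Suc K)"
    using Suc by simp
  also have "\<dots> = R1 i (Suc K) * hh i (Suc K)"
    by (rule gos_step[OF i, where q="\<lambda>k. real k - (real i + 2)"]) (simp add: R1_def algebra_simps power2_eq_square)
  finally show ?case .
qed

lemma gos2:
  assumes i: "i \<ge> 1"
  shows "(\<Sum>k\<le>K. (real k ^ 2 - (real i ^ 2 + 10 * real i + 10)) * tt i k) = R2 i K * hh i K"
proof (induction K)
  case 0
  have "tt i 0 = real i + 1" using i by (simp add: tt_def hh_def)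
  then show ?case by (simp add: R2_def hh_def algebra_simps power2_eq_square)
next
  case (Suc K)
  have "(\<Sum>k\<le>Suc K. (real k ^ 2 - (real i ^ 2 + 10 * real i + 10)) * tt i k) = R2 i K * hh i K + (real (Suc K) ^ 2 - (real i ^ 2 + 10 * real i + 10)) * tt i (Suc K)"
    using Suc by simp
  also have "\<dots> = R2 i (Suc K) * hh i (Suc K)"
    by (rule gos_step[OF i, where q="\<lambda>k. real k ^ 2 - (real i ^ 2 + 10 * real i + 10)"])
       (simp add: R2_def algebra_simps power2_eq_square power3_eq_cube)
  finally show ?case .
qed


lemma cG0:
  assumes i: "1 \<le> i" "k < i"
  shows "real (card (G 0 (i-1) k)) = (real i - real k) / (real i + real k) * (fact (i+k) / (fact k * fact i))"
proof -
  obtain j where j: "i = Suc j" using i by (cases i) auto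
  have ng: "int (card (G 0 j k)) = NG 0 j k" by (rule card_G) (use i j in simp)
  show ?thesis
  proof (cases k)
    case 0
    have "NG 0 j 0 = 1" by (simp add: NG_def)
    then show ?thesis using ng j 0 by simp
  next
    case (Suc k')
    define M where "M = j + k"
    have "NG 0 j k = int (M choose k) - int (M choose k')"
      unfolding NG_def M_def using Suc by (simp del: binomial_Suc_Suc)
    then have c: "real (card (G 0 j k)) = real (M choose k) - real (M choose k')"
      using ng by (metis of_int_diff of_int_of_nat_eq)
    have kM: "k \<le> M" "k' \<le> M" using Suc by (auto simp: M_def)
    have s1: "M - k = j" "M - k' = i" using Suc j by (auto simp: M_def)
    have b1: "real (M choose k) = fact M / (fact k * fact j)"
      using binomial_fact[OF kM(1), where 'a=real] unfolding s1 .
    have b2: "real (M choose k') = fact M / (fact k' * fact i)"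
      using binomial_fact[OF kM(2), where 'a=real] unfolding s1 .
    have f1: "(fact k :: real) = real k * fact k'" using Suc by simp
    have f2: "(fact i :: real) = real i * fact j" using j by simp
    have f3: "(fact (i+k) :: real) = (real i + real k) * fact M"
    proof -
      have ik: "i + k = Suc M" using j by (simp add: M_def)
      then have e: "real i + real k = real (Suc M)" by (metis of_nat_add)
      show ?thesis unfolding ik e fact_Suc by simp
    qed
    have alg: "X / (KK * Z * Y) - X / (Z * (II * Y)) = (II - KK) / (II + KK) * ((II + KK) * X / (KK * Z * (II * Y)))"
      if "KK > 0" "II > 0" "Z > 0" "Y > 0" for X Y Z KK II :: real
    proof -
      have "X / (KK * Z * Y) - X / (Z * (II * Y)) = (II - KK) * (X / (KK * Z * (II * Y)))"
        using that by (simp add: field_simps)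
      also have "\<dots> = (II - KK) / (II + KK) * ((II + KK) * (X / (KK * Z * (II * Y))))"
        using that by simp
      finally show ?thesis by simp
    qed
    have "real (card (G 0 j k)) = (real i - real k) / (real i + real k) * ((real i + real k) * fact M / (real k * fact k' * (real i * fact j)))"
      unfolding c b1 b2 f1 f2 using Suc j by (intro alg) auto
    then show ?thesis unfolding f1 f2 f3 using j by simp
  qed
qed

lemma p_val:
  assumes i: "1 \<le> i" "k < i"
  shows "p_lim i (i+k) = tt i k * (1/2)^i"
proof -
  have r: "1 \<le> i" "i \<le> i+k" "i+k \<le> 2*i-1" using i by auto
  have "p_lim i (i+k) = real (card (G 0 (i-1) k)) * ((real (2*i-(i+k)) + 1) * (1/2)^(i+k))"
    unfolding p_lim_def using limI[OF prob_lim[OF r]] by simp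
  also have "\<dots> = tt i k * (1/2)^i"
  proof -
    have "real (2*i-(i+k)) = real i - real k" using i by (simp add: of_nat_diff)
    then show ?thesis unfolding cG0[OF i] tt_def hh_def using i
      by (simp add: power_add field_simps)
  qed
  finally show ?thesis .
qed

lemma reindex: "1 \<le> i \<Longrightarrow> (\<Sum>r\<in>{i..2*i-1}. f r) = (\<Sum>k<i. f (i+k))"
  for i :: nat and f :: "nat \<Rightarrow> 'b::comm_monoid_add"
proof -
  assume i: "1 \<le> i"
  have "{i..2*i-1} = (\<lambda>k. i+k) ` {..<i}"
  proof (intro set_eqI iffI)
    fix r assume "r \<in> {i..2*i-1}"
    then have "r = i + (r - i)" "r - i < i" using i by auto
    then show "r \<in> (\<lambda>k. i+k) ` {..<i}" by blast
  qed (use i in auto)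
  then show ?thesis by (simp add: sum.reindex)
qed

lemma card_syt_pos: "1 \<le> n \<Longrightarrow> real (card (syt n)) > 0"
  using cardG_closed[of n 0] by (simp add: card_syt)

lemma total_one:
  assumes i: "1 \<le> i"
  shows "(\<Sum>r\<in>{i..2*i-1}. p_lim i r) = 1"
proof -
  have lim: "(\<lambda>n. \<Sum>r\<in>{i..2*i-1}. syt_prob n i r) \<longlonglongrightarrow> (\<Sum>r\<in>{i..2*i-1}. p_lim i r)"
  proof (intro tendsto_sum)
    fix r assume "r \<in> {i..2*i-1}"
    then have "convergent (\<lambda>n. syt_prob n i r)" using prob_lim[of i r] i by (auto intro: convergentI)
    then show "(\<lambda>n. syt_prob n i r) \<longlonglongrightarrow> p_lim i r"
      unfolding p_lim_def by (simp add: convergent_LIMSEQ_iff)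
  qed
  have ev: "\<forall>\<^sub>F n in sequentially. (\<Sum>r\<in>{i..2*i-1}. syt_prob n i r) = 1"
    using eventually_ge_at_top[of "2*i"]
  proof eventually_elim
    case (elim n)
    have n: "i \<le> n" "1 \<le> n" using elim i by auto
    have "(\<Sum>r\<in>{i..2*i-1}. syt_prob n i r)
        = real (\<Sum>r\<in>{i..2*i-1}. card {T\<in>syt n. T 1 i = r}) / real (card (syt n))"
      unfolding syt_prob_def by (simp add: sum_divide_distrib)
    also have "\<dots> = 1" unfolding sum_prob[OF i n(1)] using card_syt_pos[OF n(2)] by simp
    finally show ?case .
  qed
  have "(\<lambda>n. \<Sum>r\<in>{i..2*i-1}. syt_prob n i r) \<longlonglongrightarrow> 1"
  proof (rule Lim_transform_eventually[OF tendsto_const])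
    show "\<forall>\<^sub>F n in sequentially. 1 = (\<Sum>r\<in>{i..2*i-1}. syt_prob n i r)"
      by (rule eventually_mono[OF ev]) simp
  qed
  then show ?thesis using LIMSEQ_unique[OF lim] by simp
qed


lemma A_ident:
  assumes "i = Suc j"
  shows "2 * (2 * real i + 1) * (hh i j * (1/2)^i) = 2 * (1/4)^i * fact (2*i+1) / (fact i)^2"
proof -
  have f1: "(fact (2*i+1) :: real) = (2*real j + 3) * (2*real j + 2) * fact (2*j+1)"
  proof -
    have "2*i+1 = Suc (Suc (2*j+1))" using assms by simp
    then show ?thesis by (simp add: algebra_simps)
  qed
  have f2: "(fact i :: real) = (real j + 1) * fact j" using assms by simp
  have e: "i + j = 2*j+1" using assms by simp
  have p: "(1/4::real)^i = (1/2)^j * (1/2)^i * (1/2)"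
  proof -
    have "(1/4::real)^i = ((1/2)^2)^i" by (simp add: power2_eq_square)
    also have "\<dots> = (1/2)^(2*i)" by (simp add: power_mult)
    also have "\<dots> = (1/2)^j * (1/2)^i * (1/2)" using assms by (simp add: power_add mult_2)
    finally show ?thesis .
  qed
  have g: "2 * a * (F / (Fj * Fi) * P * Q) = 2 * (P * Q * (1/2)) * (a * (2 * J) * F) / (Fi * (J * Fj))"
    if "J > 0" "Fj > 0" "Fi > 0" for a F Fj Fi P Q J :: real
    using that by (simp add: field_simps)
  have a: "2 * real i + 1 = 2 * real j + 3" "2 * real j + 2 = 2 * (real j + 1)" using assms by simp_all
  have "2 * (2 * real i + 1) * (hh i j * (1/2)^i) =
    2 * (2 * real i + 1) * (fact (2*j+1) / (fact j * fact i) * (1/2)^j * (1/2)^i)"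
    unfolding hh_def e by simp
  also have "\<dots> = 2 * ((1/2)^j * (1/2)^i * (1/2)) * ((2 * real i + 1) * (2 * (real j + 1)) * fact (2*j+1)) / (fact i * ((real j + 1) * fact j))"
    by (rule g) auto
  also have "\<dots> = 2 * (1/4)^i * fact (2*i+1) / (fact i)^2"
    unfolding p f1 f2 a power2_eq_square by (simp add: mult.assoc)
  finally show ?thesis .
qed

theorem mainTheorem4:
  fixes i :: nat
  assumes "1 \<le> i"
  shows "(\<forall>r. convergent (\<lambda>n. syt_prob n i r))
    \<and> dist_variance (p_lim i) {i..2*i-1}
        = - (4 * (1/16)^i * (fact (2*i+1))^2 / (fact i)^4)
          - (2 * (1/4)^i * fact (2*i+1) / (fact i)^2)
          + 6 * real i + 6"
proof
  show "\<forall>r. convergent (\<lambda>n. syt_prob n i r)"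
  proof
    fix r
    show "convergent (\<lambda>n. syt_prob n i r)"
    proof (cases "r \<in> {i..2*i-1}")
      case True
      then show ?thesis using prob_lim[of i r] assms by (auto intro: convergentI)
    next
      case False
      have ev: "\<forall>\<^sub>F n in sequentially. 0 = syt_prob n i r"
        using eventually_ge_at_top[of i]
      proof eventually_elim
        case (elim n)
        have E: "{T\<in>syt n. T 1 i = r} = {}"
          using pos_range[OF _ assms elim] False by (auto simp: syt_def)
        show ?case unfolding syt_prob_def E by simp
      qed
      show ?thesis by (rule convergentI[OF Lim_transform_eventually[OF tendsto_const ev]])
    qed
  qed
next
  obtain j where j: "i = Suc j" using assms by (cases i) auto
  define c :: real where "c = (1/2)^i"
  define B where "B = hh i j * c"
  define W0 where "W0 = (\<Sum>k\<le>j. tt i k * c)"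
  define W1 where "W1 = (\<Sum>k\<le>j. real k * (tt i k * c))"
  define W2 where "W2 = (\<Sum>k\<le>j. real k ^ 2 * (tt i k * c))"
  have lt: "{..<i} = {..j}" using j by auto
  have pv: "p_lim i (i+k) = tt i k * c" if "k \<in> {..j}" for k
  proof -
    have "k < i" using that j by auto
    then show ?thesis using p_val[OF assms] by (simp add: c_def)
  qed
  have W0: "W0 = 1"
  proof -
    have "1 = (\<Sum>k<i. p_lim i (i+k))" using total_one[OF assms] reindex[OF assms, of "p_lim i"] by simp
    also have "\<dots> = W0" unfolding lt W0_def by (rule sum.cong) (auto simp: pv)
    finally show ?thesis by simp
  qed
  have g1: "W1 = (real i + 2) + R1 i j * B"
  proof -
    have "(\<Sum>k\<le>j. (real k - (real i + 2)) * tt i k) * c = R1 i j * B"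
      using gos1[OF assms, of j] by (simp add: B_def)
    moreover have "(\<Sum>k\<le>j. (real k - (real i + 2)) * tt i k) * c = W1 - (real i + 2) * W0"
    proof -
      have "(\<Sum>k\<le>j. (real k - (real i + 2)) * tt i k) * c
          = (\<Sum>k\<le>j. real k * (tt i k * c) - (real i + 2) * (tt i k * c))"
        unfolding sum_distrib_right by (rule sum.cong) (auto simp: algebra_simps)
      also have "\<dots> = W1 - (real i + 2) * W0"
        unfolding sum_subtractf W1_def W0_def sum_distrib_left ..
      finally show ?thesis .
    qed
    ultimately have "W1 - (real i + 2) * W0 = R1 i j * B" by simp
    then show ?thesis using W0 by simp
  qed
  have g2: "W2 = (real i ^ 2 + 10 * real i + 10) + R2 i j * B"
  proof -
    have "(\<Sum>k\<le>j. (real k ^ 2 - (real i ^ 2 + 10 * real i + 10)) * tt i k) * c = R2 i j * B"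
      using gos2[OF assms, of j] by (simp add: B_def)
    moreover have "(\<Sum>k\<le>j. (real k ^ 2 - (real i ^ 2 + 10 * real i + 10)) * tt i k) * c
        = W2 - (real i ^ 2 + 10 * real i + 10) * W0"
    proof -
      have "(\<Sum>k\<le>j. (real k ^ 2 - (real i ^ 2 + 10 * real i + 10)) * tt i k) * c
          = (\<Sum>k\<le>j. real k ^ 2 * (tt i k * c) - (real i ^ 2 + 10 * real i + 10) * (tt i k * c))"
        unfolding sum_distrib_right by (rule sum.cong) (auto simp: algebra_simps)
      also have "\<dots> = W2 - (real i ^ 2 + 10 * real i + 10) * W0"
        unfolding sum_subtractf W2_def W0_def sum_distrib_left ..
      finally show ?thesis .
    qed
    ultimately have "W2 - (real i ^ 2 + 10 * real i + 10) * W0 = R2 i j * B" by simp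
    then show ?thesis using W0 by simp
  qed
  have rj: "real j = real i - 1" using j by simp
  have r1: "R1 i j = -(4 * real i + 2)" unfolding R1_def rj by (simp add: algebra_simps power2_eq_square)
  have r2: "R2 i j = -2 * (2 * real i + 1) * (2 * real i + 5)"
    unfolding R2_def rj by (simp add: algebra_simps power2_eq_square power3_eq_cube)
  define mu where "mu = dist_mean (p_lim i) {i..2*i-1}"
  have mu: "mu = real i + W1"
  proof -
    have "mu = (\<Sum>k<i. real (i+k) * p_lim i (i+k))"
      unfolding mu_def dist_mean_def using reindex[OF assms, of "\<lambda>r. real r * p_lim i r"] by simp
    also have "\<dots> = (\<Sum>k\<le>j. real i * (tt i k * c) + real k * (tt i k * c))"
      unfolding lt by (rule sum.cong[OF refl]) (simp only: pv, simp add: algebra_simps)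
    also have "\<dots> = real i * W0 + W1"
      unfolding W0_def W1_def by (simp add: sum.distrib sum_distrib_left)
    finally show ?thesis using W0 by simp
  qed
  have var: "dist_variance (p_lim i) {i..2*i-1} = W2 - W1^2"
  proof -
    have "dist_variance (p_lim i) {i..2*i-1} = (\<Sum>k<i. (real (i+k) - mu)^2 * p_lim i (i+k))"
      unfolding dist_variance_def mu_def[symmetric]
      using reindex[OF assms, of "\<lambda>r. (real r - mu)^2 * p_lim i r"] by simp
    also have "\<dots> = (\<Sum>k\<le>j. W1^2 * (tt i k * c) + (- 2 * W1) * (real k * (tt i k * c)) + real k ^ 2 * (tt i k * c))"
      unfolding lt by (rule sum.cong[OF refl]) (simp only: pv, simp add: mu power2_eq_square algebra_simps)
    also have "\<dots> = W1^2 * W0 + (- 2 * W1) * W1 + W2"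
      unfolding W0_def W1_def W2_def by (simp add: sum.distrib sum_distrib_left)
    finally show ?thesis using W0 by (simp add: power2_eq_square)
  qed
  define A :: real where "A = 2 * (1/4)^i * fact (2*i+1) / (fact i)^2"
  have AB: "A = 2 * (2 * real i + 1) * B" unfolding A_def B_def c_def using A_ident[OF j] by simp
  have A2: "4 * (1/16)^i * (fact (2*i+1))^2 / (fact i)^4 = A^2"
  proof -
    have "((1/4::real)^i)^2 = ((1/4)^2)^i" by (simp only: power_mult[symmetric] mult.commute)
    also have "\<dots> = (1/16)^i" by (simp add: power2_eq_square)
    finally have "((1/4::real)^i)^2 = (1/16)^i" .
    moreover have gen: "(2*q*F/G)^2 = 4*(q^2)*F^2/(G^2)" for q F G :: real
      by (simp add: power_divide power_mult_distrib)
    moreover have "((fact i :: real)^2)^2 = (fact i)^4" by (simp flip: power_mult)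
    ultimately show ?thesis unfolding A_def gen by simp
  qed
  show "dist_variance (p_lim i) {i..2*i-1}
        = - (4 * (1/16)^i * (fact (2*i+1))^2 / (fact i)^4)
          - (2 * (1/4)^i * fact (2*i+1) / (fact i)^2)
          + 6 * real i + 6"
    unfolding var A2 A_def[symmetric] g1 g2 r1 r2 AB by (simp add: algebra_simps power2_eq_square)
qed


end
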